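(* Let $T$ be a tree of order $n$, and let $d_i$ denote the number of dominating sets of $T$ of size $i$. Then $$d_{\gamma(T)}\le d_{\gamma(T)+1}\le\cdots\le d_{\left\lfloor\frac{n+2\gamma(T)+1}{3}\right\rfloor}.$$
   Context: A dominating set of a graph $G=(V,E)$ is a set $S\subseteq V$ such that every vertex is in $S$ or adjacent to a vertex of $S$. $\gamma(T)$ is the minimum size of a dominating set of $T$. *)

theory Defs
  imports Main
begin

definition simple_graph :: "'a set \<Rightarrow> 'a set set \<Rightarrow> bool" where
  "simple_graph V E \<longleftrightarrow> finite V \<and> (\<forall>e\<in>E. e \<subseteq> V \<and> card e = 2)"

definition adj :: "'a set set \<Rightarrow> 'a \<Rightarrow> 'a \<Rightarrow> bool" where
  "adj E u v \<longleftrightarrow> {u, v} \<in> E"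

definition connected_graph :: "'a set \<Rightarrow> 'a set set \<Rightarrow> bool" where
  "connected_graph V E \<longleftrightarrow> V \<noteq> {} \<and> (\<forall>u\<in>V. \<forall>v\<in>V. (adj E)\<^sup>*\<^sup>* u v)"

definition tree :: "'a set \<Rightarrow> 'a set set \<Rightarrow> bool" where
  "tree V E \<longleftrightarrow> simple_graph V E \<and> connected_graph V E \<and> card E = card V - 1"

definition dominating_set :: "'a set \<Rightarrow> 'a set set \<Rightarrow> 'a set \<Rightarrow> bool" where
  "dominating_set V E S \<longleftrightarrow> S \<subseteq> V \<and> (\<forall>v\<in>V. v \<in> S \<or> (\<exists>u\<in>S. adj E u v))"

definition domination_number :: "'a set \<Rightarrow> 'a set set \<Rightarrow> nat" where
  "domination_number V E = (LEAST k. \<exists>S. dominating_set V E S \<and> card S = k)"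

definition num_dom_sets :: "'a set \<Rightarrow> 'a set set \<Rightarrow> nat \<Rightarrow> nat" where
  "num_dom_sets V E i = card {S. dominating_set V E S \<and> card S = i}"

end

theory Submission imports Defs begin

lemma sg_finE: "simple_graph V E \<Longrightarrow> finite E"
  unfolding simple_graph_def by (meson Pow_iff finite_Pow_iff finite_subset subsetI)

lemma edge_sub: "simple_graph V E \<Longrightarrow> e \<in> E \<Longrightarrow> e \<subseteq> V"
  unfolding simple_graph_def by simp

lemma edge_card: "simple_graph V E \<Longrightarrow> e \<in> E \<Longrightarrow> card e = 2"
  unfolding simple_graph_def by simp

lemma crossing:
  assumes "(adj E)\<^sup>*\<^sup>* u v" "u \<in> S" "v \<notin> S"
  shows "\<exists>a b. {a,b} \<in> E \<and> a \<in> S \<and> b \<notin> S"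
  using assms
proof (induction rule: rtranclp_induct)
  case base then show ?case by simp
next
  case (step y z)
  show ?case
  proof (cases "y \<in> S")
    case True then show ?thesis using step by (auto simp: adj_def)
  next
    case False then show ?thesis using step by blast
  qed
qed

lemma outside_edges:
  assumes sg: "simple_graph V E" and cg: "connected_graph V E"
  shows "S \<subseteq> V \<Longrightarrow> S \<noteq> {} \<Longrightarrow> card (V - S) \<le> card {e\<in>E. \<not> e \<subseteq> S}"
proof (induction "card (V - S)" arbitrary: S)
  case 0
  then show ?case by simp
next
  case (Suc m)
  have fV: "finite V" using sg by (simp add: simple_graph_def)
  have fE: "finite E" using sg by (rule sg_finE)
  obtain v where v: "v \<in> V - S" using Suc(2) by (metis card.empty ex_in_conv nat.distinct(1))
  obtain u where u: "u \<in> S" using Suc(4) by blast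
  have uv: "(adj E)\<^sup>*\<^sup>* u v" using cg u v Suc(3) unfolding connected_graph_def by (meson DiffD1 subsetD)
  then obtain a b where ab: "{a,b} \<in> E" "a \<in> S" "b \<notin> S" using crossing[OF uv u] v by blast
  have bV: "b \<in> V" using edge_sub[OF sg ab(1)] by simp
  let ?S = "insert b S"
  have bVS: "b \<in> V - S" using bV ab by simp
  have VS: "V - ?S = (V - S) - {b}" by auto
  have c1: "m = card (V - ?S)" unfolding VS using Suc(2) bVS fV
    by (metis card_Diff_singleton diff_Suc_1 finite_Diff)
  have IH: "card (V - ?S) \<le> card {e\<in>E. \<not> e \<subseteq> ?S}"
    using Suc(1)[OF c1] Suc(3) bV by blast
  have sub: "{e\<in>E. \<not> e \<subseteq> ?S} \<subseteq> {e\<in>E. \<not> e \<subseteq> S} - {{a,b}}" using ab by auto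
  have inn: "{a,b} \<in> {e\<in>E. \<not> e \<subseteq> S}" using ab by auto
  have fin: "finite {e\<in>E. \<not> e \<subseteq> S}" using fE by simp
  have l1: "card {e\<in>E. \<not> e \<subseteq> ?S} \<le> card ({e\<in>E. \<not> e \<subseteq> S} - {{a,b}})"
    by (rule card_mono) (use fE sub in auto)
  have l2: "card ({e\<in>E. \<not> e \<subseteq> S} - {{a,b}}) = card {e\<in>E. \<not> e \<subseteq> S} - 1"
    using inn fin by (simp add: card_Diff_singleton)
  have l3: "card {e\<in>E. \<not> e \<subseteq> S} \<ge> 1" using inn fin
    by (metis One_nat_def Suc_leI card_gt_0_iff empty_iff)
  show ?case using c1 IH Suc(2) l1 l2 l3 by linarith
qed

lemma forest_prop:
  assumes "tree V E" "S \<subseteq> V" "S \<noteq> {}"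
  shows "card {e\<in>E. e \<subseteq> S} \<le> card S - 1"
proof -
  have sg: "simple_graph V E" and cg: "connected_graph V E" and ce: "card E = card V - 1"
    using assms(1) by (auto simp: tree_def)
  have fV: "finite V" using sg by (simp add: simple_graph_def)
  have fE: "finite E" using sg by (rule sg_finE)
  have o: "card (V - S) \<le> card {e\<in>E. \<not> e \<subseteq> S}" using outside_edges[OF sg cg assms(2,3)] .
  have eq: "E = {e\<in>E. e \<subseteq> S} \<union> {e\<in>E. \<not> e \<subseteq> S}" by auto
  have "card E = card {e\<in>E. e \<subseteq> S} + card {e\<in>E. \<not> e \<subseteq> S}"
    by (subst eq, rule card_Un_disjoint) (use fE in auto)
  moreover have "card S \<le> card V" using fV assms(2) by (rule card_mono)
  moreover have "card (V - S) = card V - card S" using fV assms(2) by (meson card_Diff_subset finite_subset)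
  moreover have "card V \<ge> 1" using fV assms by (metis One_nat_def Suc_leI card_gt_0_iff subset_empty)
  ultimately show ?thesis using o ce by linarith
qed

lemma low_degree:
  fixes F :: "'a set set"
  assumes fS: "finite S" and ne: "S \<noteq> {}" and c2: "\<forall>e\<in>F. card e = 2"
    and cnt: "card {e\<in>F. e \<subseteq> S} \<le> card S - 1"
  shows "\<exists>v\<in>S. card {e\<in>{e\<in>F. e \<subseteq> S}. v \<in> e} \<le> 1"
proof (rule ccontr)
  assume "\<not> ?thesis"
  then have ge: "\<forall>v\<in>S. 2 \<le> card {e\<in>{e\<in>F. e \<subseteq> S}. v \<in> e}" by auto
  let ?F = "{e\<in>F. e \<subseteq> S}"
  have fF: "finite ?F" by (rule finite_subset[of _ "Pow S"]) (use fS in auto)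
  have "\<forall>e\<in>?F. card {v\<in>S. v \<in> e} = 2"
  proof
    fix e assume "e \<in> ?F"
    then have "{v\<in>S. v \<in> e} = e" "card e = 2" using c2 by auto
    then show "card {v\<in>S. v \<in> e} = 2" by simp
  qed
  then have eq: "(\<Sum>v\<in>S. card {e\<in>?F. v \<in> e}) = 2 * card ?F"
    by (rule sum_multicount[OF fS fF])
  have "(\<Sum>v\<in>S. 2) \<le> (\<Sum>v\<in>S. card {e\<in>?F. v \<in> e})"
    by (rule sum_mono) (use ge in auto)
  then have "2 * card S \<le> 2 * card ?F" using eq by simp
  moreover have "card S \<ge> 1" using fS ne by (simp add: Suc_leI card_gt_0_iff)
  ultimately show False using cnt by linarith
qed

lemma indep_half:
  fixes F :: "'a set set"
  assumes "finite S" "\<forall>e\<in>F. card e = 2"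
    "\<forall>S'. S' \<subseteq> S \<longrightarrow> S' \<noteq> {} \<longrightarrow> card {e\<in>F. e \<subseteq> S'} \<le> card S' - 1"
  shows "\<exists>X\<subseteq>S. card S \<le> 2 * card X \<and> (\<forall>e\<in>F. \<not> e \<subseteq> X)"
  using assms
proof (induction "card S" arbitrary: S rule: less_induct)
  case less
  show ?case
  proof (cases "S = {}")
    case True then show ?thesis
      using less.prems(2) by (auto intro!: exI[of _ "{}"])
  next
    case False
    let ?F = "{e\<in>F. e \<subseteq> S}"
    obtain v where v: "v \<in> S" and dv: "card {e\<in>?F. v \<in> e} \<le> 1"
      using low_degree[OF less.prems(1) False less.prems(2) less.prems(3)[rule_format, OF order_refl False]] by blast
    have fF: "finite ?F" by (rule finite_subset[of _ "Pow S"]) (use less.prems(1) in auto)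
    obtain D where D: "D \<subseteq> S" "v \<in> D" "card D \<le> 2" "\<forall>e\<in>F. e \<subseteq> S \<longrightarrow> v \<in> e \<longrightarrow> e \<subseteq> D"
    proof (cases "{e\<in>?F. v \<in> e} = {}")
      case True
      show ?thesis
      proof (rule that[of "{v}"])
        show "\<forall>e\<in>F. e \<subseteq> S \<longrightarrow> v \<in> e \<longrightarrow> e \<subseteq> {v}" using True by blast
      qed (use v in auto)
    next
      case False
      then obtain e0 where e0: "e0 \<in> ?F" "v \<in> e0" by blast
      have one: "{e\<in>?F. v \<in> e} = {e0}"
      proof -
        have fin: "finite {e\<in>?F. v \<in> e}" by (rule finite_subset[OF _ fF]) auto
        have "card {e\<in>?F. v \<in> e} \<noteq> 0" using False fin by simp
        then have "card {e\<in>?F. v \<in> e} = 1" using dv by linarith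
        then obtain x where "{e\<in>?F. v \<in> e} = {x}" by (meson card_1_singletonE)
        then show ?thesis using e0 by auto
      qed
      show ?thesis
      proof (rule that[of e0])
        show "\<forall>e\<in>F. e \<subseteq> S \<longrightarrow> v \<in> e \<longrightarrow> e \<subseteq> e0" using one by blast
        show "card e0 \<le> 2" using e0 less.prems(2) by simp
      qed (use e0 in auto)
    qed
    let ?S = "S - D"
    have fD: "finite D" using D less.prems(1) by (meson finite_subset)
    have cD: "card D \<ge> 1" using fD D(2) by (metis One_nat_def Suc_leI card_gt_0_iff empty_iff)
    have cSD: "card ?S = card S - card D" using fD D(1) by (simp add: card_Diff_subset)
    have cDS: "card D \<le> card S" using D(1) less.prems(1) by (rule card_mono[rotated])
    have lt: "card ?S < card S" using cSD cD cDS by linarith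
    obtain X where X: "X \<subseteq> ?S" "card ?S \<le> 2 * card X" "\<forall>e\<in>F. \<not> e \<subseteq> X"
    proof -
      have h: "\<forall>S'. S' \<subseteq> S - D \<longrightarrow> S' \<noteq> {} \<longrightarrow> card {e\<in>F. e \<subseteq> S'} \<le> card S' - 1"
        using less.prems(3) by blast
      have "finite (S - D)" using less.prems(1) by simp
      from less.hyps[OF lt this less.prems(2) h] that show ?thesis by blast
    qed
    have vX: "v \<notin> X" using X D by auto
    have fX: "finite X" using X less.prems(1) by (meson finite_Diff finite_subset)
    have "card S = card ?S + card D" using cSD cDS by linarith
    then have c: "card S \<le> 2 * card (insert v X)" using X D vX fX by simp
    have ind: "\<forall>e\<in>F. \<not> e \<subseteq> insert v X"
    proof (intro ballI notI)
      fix e assume e: "e \<in> F" "e \<subseteq> insert v X"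
      show False
      proof (cases "v \<in> e")
        case True
        have "e \<subseteq> S" using e X D by auto
        then have "e \<subseteq> D" using D e True by blast
        then have "e \<subseteq> {v}" using e X by auto
        then have "card e \<le> 1" using card_mono[of "{v}" e] by simp
        moreover have "card e = 2" using e less.prems(2) by auto
        ultimately show False by simp
      next
        case False
        then have "e \<subseteq> X" using e by auto
        then show False using X e by auto
      qed
    qed
    show ?thesis using c ind X D by (intro exI[of _ "insert v X"]) auto
  qed
qed


definition Qg :: "'a set \<Rightarrow> 'a set set \<Rightarrow> 'a set \<Rightarrow> ('a \<Rightarrow> 'a) \<Rightarrow> 'a set set" where
  "Qg V E T c = {e\<in>E. e \<subseteq> T} \<union> {{c w, b} | w b. w \<in> V - T \<and> b \<in> T \<and> {w,b} \<in> E \<and> b \<noteq> c w}"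

lemma Q_count:
  assumes tr: "tree V E" and TV: "T \<subseteq> V"
    and c: "\<forall>w\<in>V-T. c w \<in> T \<and> {w, c w} \<in> E"
    and S: "S \<subseteq> T" "S \<noteq> {}"
  shows "card {e\<in>Qg V E T c. e \<subseteq> S} \<le> card S - 1"
proof -
  have sg: "simple_graph V E" using tr by (simp add: tree_def)
  have fV: "finite V" using sg by (simp add: simple_graph_def)
  have fE: "finite E" using sg by (rule sg_finE)
  define P where "P = {(w,b). w \<in> V-T \<and> b \<in> S \<and> {w,b}\<in>E \<and> b \<noteq> c w \<and> c w \<in> S}"
  define W where "W = fst ` P"
  define A where "A = {e\<in>E. e \<subseteq> S}"
  have fP: "finite P" by (rule finite_subset[of _ "V \<times> V"]) (use fV TV S in \<open>auto simp: P_def\<close>)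
  have fA: "finite A" using fE by (simp add: A_def)
  have fW: "finite W" using fP by (simp add: W_def)
  have WVT: "W \<subseteq> V - T" by (auto simp: W_def P_def)
  have sub1: "{e\<in>Qg V E T c. e \<subseteq> S} \<subseteq> A \<union> (\<lambda>(w,b). {c w, b}) ` P"
    unfolding Qg_def A_def P_def by auto
  have "card {e\<in>Qg V E T c. e \<subseteq> S} \<le> card (A \<union> (\<lambda>(w,b). {c w, b}) ` P)"
    by (rule card_mono[OF _ sub1]) (use fA fP in simp)
  also have "\<dots> \<le> card A + card ((\<lambda>(w,b). {c w, b}) ` P)" by (rule card_Un_le)
  also have "\<dots> \<le> card A + card P" using card_image_le[OF fP] by simp
  finally have l1: "card {e\<in>Qg V E T c. e \<subseteq> S} \<le> card A + card P" .
  define B1 where "B1 = (\<lambda>(w,b). {w,b}) ` P"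
  define B2 where "B2 = (\<lambda>w. {w, c w}) ` W"
  have inj1: "inj_on (\<lambda>(w,b). {w,b}) P"
  proof (rule inj_onI, clarify)
    fix w b w' b' assume a: "(w,b) \<in> P" "(w',b') \<in> P" "{w,b} = {w',b'}"
    then have "w \<notin> T" "w' \<notin> T" "b \<in> T" "b' \<in> T" using S by (auto simp: P_def)
    then show "w = w' \<and> b = b'" using a(3) by (metis doubleton_eq_iff)
  qed
  have inj2: "inj_on (\<lambda>w. {w, c w}) W"
  proof (rule inj_onI)
    fix w w' assume a: "w \<in> W" "w' \<in> W" "{w, c w} = {w', c w'}"
    then have "w \<notin> T" "w' \<notin> T" "c w \<in> T" "c w' \<in> T" using WVT c by auto
    then show "w = w'" using a(3) by (metis doubleton_eq_iff)
  qed
  have cB1: "card B1 = card P" unfolding B1_def by (rule card_image[OF inj1])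
  have cB2: "card B2 = card W" unfolding B2_def by (rule card_image[OF inj2])
  have d1: "A \<inter> B1 = {}"
  proof -
    have "\<forall>e\<in>B1. \<not> e \<subseteq> T" by (auto simp: B1_def P_def)
    moreover have "\<forall>e\<in>A. e \<subseteq> T" using S by (auto simp: A_def)
    ultimately show ?thesis by blast
  qed
  have d2: "(A \<union> B1) \<inter> B2 = {}"
  proof -
    have "\<forall>e\<in>B2. \<not> e \<subseteq> T" using WVT by (auto simp: B2_def)
    moreover have "\<forall>e\<in>A. e \<subseteq> T" using S by (auto simp: A_def)
    moreover have "B1 \<inter> B2 = {}"
    proof (rule ccontr)
      assume "B1 \<inter> B2 \<noteq> {}"
      then obtain w b w' where p: "(w,b) \<in> P" "w' \<in> W" "{w,b} = {w', c w'}"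
        by (auto simp: B1_def B2_def)
      then have "w \<notin> T" "w' \<notin> T" "b \<in> T" "c w' \<in> T" "b \<noteq> c w" using S WVT c by (auto simp: P_def)
      then show False using p(3) by (metis doubleton_eq_iff)
    qed
    ultimately show ?thesis by blast
  qed
  have SW: "S \<inter> W = {}" using WVT S by blast
  have sub2: "A \<union> B1 \<union> B2 \<subseteq> {e\<in>E. e \<subseteq> S \<union> W}"
  proof -
    have "B1 \<subseteq> {e\<in>E. e \<subseteq> S \<union> W}" unfolding B1_def W_def P_def by force
    moreover have "B2 \<subseteq> {e\<in>E. e \<subseteq> S \<union> W}"
    proof
      fix e assume "e \<in> B2"
      then obtain w where w: "w \<in> W" "e = {w, c w}" by (auto simp: B2_def)
      then obtain b where "(w,b) \<in> P" by (auto simp: W_def)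
      then have "c w \<in> S" "w \<in> V - T" by (auto simp: P_def)
      then show "e \<in> {e\<in>E. e \<subseteq> S \<union> W}" using w c by auto
    qed
    ultimately show ?thesis by (auto simp: A_def)
  qed
  have fB1: "finite B1" using fP by (simp add: B1_def)
  have fB2: "finite B2" using fW by (simp add: B2_def)
  have "card (A \<union> B1 \<union> B2) = card (A \<union> B1) + card B2"
    using d2 fA fB1 fB2 by (intro card_Un_disjoint) auto
  also have "card (A \<union> B1) = card A + card B1"
    using d1 fA fB1 by (intro card_Un_disjoint) auto
  finally have cU: "card (A \<union> B1 \<union> B2) = card A + card B1 + card B2" .
  have "card A + card B1 + card B2 \<le> card {e\<in>E. e \<subseteq> S \<union> W}"
    unfolding cU[symmetric] by (rule card_mono) (use fE sub2 in auto)
  also have "\<dots> \<le> card (S \<union> W) - 1"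
    by (rule forest_prop[OF tr]) (use S TV WVT in auto)
  also have "\<dots> = card S + card W - 1"
  proof -
    have "finite S" using S(1) TV fV by (meson finite_subset)
    then show ?thesis using SW fW by (simp add: card_Un_disjoint)
  qed
  finally show ?thesis using l1 cB1 cB2 by linarith
qed


lemma dom_card_ge:
  assumes "dominating_set V E S"
  shows "domination_number V E \<le> card S"
  unfolding domination_number_def by (rule Least_le) (use assms in blast)

lemma key:
  assumes tr: "tree V E" and dT: "dominating_set V E T"
  shows "card {v\<in>T. dominating_set V E (T - {v})} + 2 * domination_number V E \<le> 2 * card T"
proof -
  have sg: "simple_graph V E" using tr by (simp add: tree_def)
  have fV: "finite V" using sg by (simp add: simple_graph_def)
  have TV: "T \<subseteq> V" using dT by (simp add: dominating_set_def)
  have fT: "finite T" using TV fV by (meson finite_subset)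
  define c where "c w = (SOME u. u \<in> T \<and> {w,u} \<in> E)" for w
  have c: "\<forall>w\<in>V-T. c w \<in> T \<and> {w, c w} \<in> E"
  proof
    fix w assume w: "w \<in> V - T"
    then obtain u where "u \<in> T" "adj E u w" using dT by (auto simp: dominating_set_def)
    then have "\<exists>u. u \<in> T \<and> {w,u} \<in> E" by (auto simp: adj_def insert_commute)
    then show "c w \<in> T \<and> {w, c w} \<in> E" unfolding c_def by (rule someI_ex)
  qed
  define R where "R = {v\<in>T. dominating_set V E (T - {v})}"
  have RT: "R \<subseteq> T" by (auto simp: R_def)
  have fR: "finite R" using RT fT by (meson finite_subset)
  have c2: "\<forall>e\<in>Qg V E T c. card e = 2"
    using edge_card[OF sg] by (auto simp: Qg_def)
  have h: "\<forall>S'. S' \<subseteq> R \<longrightarrow> S' \<noteq> {} \<longrightarrow> card {e\<in>Qg V E T c. e \<subseteq> S'} \<le> card S' - 1"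
    using Q_count[OF tr TV c] RT by blast
  obtain X where X: "X \<subseteq> R" "card R \<le> 2 * card X" "\<forall>e\<in>Qg V E T c. \<not> e \<subseteq> X"
    using indep_half[OF fR c2 h] by blast
  have domTX: "dominating_set V E (T - X)"
    unfolding dominating_set_def
  proof (intro conjI ballI)
    show "T - X \<subseteq> V" using TV by blast
  next
    fix v assume v: "v \<in> V"
    show "v \<in> T - X \<or> (\<exists>u\<in>T - X. adj E u v)"
    proof (cases "v \<in> T")
      case True
      show ?thesis
      proof (cases "v \<in> X")
        case False then show ?thesis using True by blast
      next
        case vX: True
        then have "dominating_set V E (T - {v})" using X(1) by (auto simp: R_def)
        then obtain u where u: "u \<in> T - {v}" "adj E u v" using v by (auto simp: dominating_set_def)
        then have "{u,v} \<in> E" "{u,v} \<subseteq> T" using True by (auto simp: adj_def)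
        then have "{u,v} \<in> Qg V E T c" unfolding Qg_def by blast
        then have "\<not> {u,v} \<subseteq> X" using X(3) by blast
        then have "u \<notin> X" using vX by simp
        then show ?thesis using u by blast
      qed
    next
      case False
      then have cv: "c v \<in> T" "{v, c v} \<in> E" using c v by auto
      show ?thesis
      proof (cases "c v \<in> X")
        case False then show ?thesis using cv by (auto simp: adj_def insert_commute)
      next
        case cX: True
        then have "dominating_set V E (T - {c v})" using X(1) by (auto simp: R_def)
        then obtain u where u: "u \<in> T - {c v}" "adj E u v" using v False by (auto simp: dominating_set_def)
        then have vu: "{v,u} \<in> E" by (simp add: adj_def insert_commute)
        have "v \<in> V - T" using False v by simp
        then have "{c v, u} \<in> Qg V E T c" unfolding Qg_def using u(1) vu by blast
        then have "\<not> {c v, u} \<subseteq> X" using X(3) by blast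
        then have "u \<notin> X" using cX by simp
        then show ?thesis using u by blast
      qed
    qed
  qed
  have g: "domination_number V E \<le> card (T - X)" by (rule dom_card_ge[OF domTX])
  have XT: "X \<subseteq> T" using X(1) RT by blast
  have "card (T - X) = card T - card X" using XT fT by (meson card_Diff_subset finite_subset)
  moreover have "card X \<le> card T" using XT fT by (rule card_mono[rotated])
  ultimately show ?thesis using g X(2) unfolding R_def by linarith
qed


lemma dom_superset:
  assumes "dominating_set V E S" "v \<in> V"
  shows "dominating_set V E (insert v S)"
  using assms by (auto simp: dominating_set_def)

lemma step_mono:
  assumes tr: "tree V E" and b: "3 * (k + 1) \<le> card V + 2 * domination_number V E + 1"
  shows "num_dom_sets V E k \<le> num_dom_sets V E (Suc k)"
proof -
  have sg: "simple_graph V E" using tr by (simp add: tree_def)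
  have fV: "finite V" using sg by (simp add: simple_graph_def)
  define n where "n = card V"
  define g where "g = domination_number V E"
  define D where "D i = {S. dominating_set V E S \<and> card S = i}" for i
  have fD: "finite (D i)" for i
    by (rule finite_subset[of _ "Pow V"]) (use fV in \<open>auto simp: D_def dominating_set_def\<close>)
  have "dominating_set V E V" by (simp add: dominating_set_def)
  then have gn: "g \<le> n" unfolding g_def n_def by (rule dom_card_ge)
  then have kn: "k < n" using b unfolding g_def[symmetric] n_def[symmetric] by presburger
  define Rm where "Rm T' = {v\<in>T'. dominating_set V E (T' - {v})}" for T'
  define P where "P = Sigma (D k) (\<lambda>S. V - S)"
  define Q where "Q = Sigma (D (Suc k)) Rm"
  have fRm: "\<forall>T'\<in>D (Suc k). finite (Rm T')"
  proof
    fix T' assume "T' \<in> D (Suc k)"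
    then have "T' \<subseteq> V" by (simp add: D_def dominating_set_def)
    then show "finite (Rm T')" using fV by (auto simp: Rm_def intro: finite_subset)
  qed
  have fQ: "finite Q" unfolding Q_def using fD fRm by blast
  have cP: "card P = card (D k) * (n - k)"
  proof -
    have "card P = (\<Sum>S\<in>D k. card (V - S))" unfolding P_def
      by (rule card_SigmaI) (use fD fV in auto)
    also have "\<dots> = (\<Sum>S\<in>D k. n - k)"
    proof (rule sum.cong[OF refl])
      fix S assume "S \<in> D k"
      then have "S \<subseteq> V" "card S = k" by (auto simp: D_def dominating_set_def)
      then show "card (V - S) = n - k" unfolding n_def using fV
        by (metis card_Diff_subset finite_subset)
    qed
    finally show ?thesis by simp
  qed
  have cQ: "card Q \<le> card (D (Suc k)) * (n - k)"
  proof -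
    have "card Q = (\<Sum>T'\<in>D (Suc k). card (Rm T'))" unfolding Q_def
      by (rule card_SigmaI[OF fD fRm])
    also have "\<dots> \<le> (\<Sum>T'\<in>D (Suc k). n - k)"
    proof (rule sum_mono)
      fix T' assume T': "T' \<in> D (Suc k)"
      then have "dominating_set V E T'" "card T' = Suc k" by (auto simp: D_def)
      then have "card (Rm T') + 2 * g \<le> 2 * Suc k" using key[OF tr] unfolding Rm_def g_def by metis
      then show "card (Rm T') \<le> n - k" using b kn unfolding g_def[symmetric] n_def[symmetric] by presburger
    qed
    finally show ?thesis by simp
  qed
  have inj: "inj_on (\<lambda>(S,v). (insert v S, v)) P"
  proof (rule inj_onI)
    fix x y assume x: "x \<in> P" and y: "y \<in> P" and eq: "(\<lambda>(S,v). (insert v S, v)) x = (\<lambda>(S,v). (insert v S, v)) y"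
    obtain S v where xs: "x = (S,v)" by fastforce
    obtain S' v' where ys: "y = (S',v')" by fastforce
    have vv: "v' = v" and ins: "insert v S = insert v S'" using eq xs ys by auto
    have "v \<notin> S" "v \<notin> S'" using x y xs ys vv by (auto simp: P_def)
    then have "S = S'" using ins by (metis Diff_insert_absorb)
    then show "x = y" using xs ys vv by simp
  qed
  have img: "(\<lambda>(S,v). (insert v S, v)) ` P \<subseteq> Q"
  proof clarify
    fix S v assume a: "(S,v) \<in> P"
    then have d: "dominating_set V E S" "card S = k" "v \<in> V" "v \<notin> S" by (auto simp: P_def D_def)
    have fS: "finite S" using d(1) fV by (meson dominating_set_def finite_subset)
    have "dominating_set V E (insert v S)" using dom_superset[OF d(1) d(3)] .
    moreover have "card (insert v S) = Suc k" using fS d by simp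
    moreover have "insert v S - {v} = S" using d(4) by simp
    ultimately show "(insert v S, v) \<in> Q" using d(1) by (auto simp: Q_def D_def Rm_def)
  qed
  have "card P \<le> card Q" using card_inj_on_le[OF inj img fQ] .
  then have "card (D k) * (n - k) \<le> card (D (Suc k)) * (n - k)" using cP cQ by linarith
  then have "card (D k) \<le> card (D (Suc k))" using kn by simp
  then show ?thesis by (simp add: num_dom_sets_def D_def)
qed

theorem theorem3p5:
  fixes V :: "'a set" and E :: "'a set set"
  assumes "tree V E"
  shows "\<forall>i j. domination_number V E \<le> i \<and> i \<le> j \<and>
            j \<le> (card V + 2 * domination_number V E + 1) div 3 \<longrightarrow>
            num_dom_sets V E i \<le> num_dom_sets V E j"
proof (intro allI impI)
  fix i j assume h: "domination_number V E \<le> i \<and> i \<le> j \<and>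
            j \<le> (card V + 2 * domination_number V E + 1) div 3"
  have "i \<le> j" using h by simp
  then show "num_dom_sets V E i \<le> num_dom_sets V E j"
  proof (induction j rule: dec_induct)
    case base then show ?case by simp
  next
    case (step m)
    have "Suc m \<le> (card V + 2 * domination_number V E + 1) div 3" using step.hyps(2) h by linarith
    then have "3 * (m + 1) \<le> card V + 2 * domination_number V E + 1" by presburger
    then have "num_dom_sets V E m \<le> num_dom_sets V E (Suc m)" by (rule step_mono[OF assms])
    then show ?case using step.IH by linarith
  qed
qed

end
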